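(* Let $m\in\mathbb Z_{\ge0}$, $c\in\mathbb C$, and $D^c_{m+1}=z^2\frac{d}{dz}\left(\frac{1-z}{z}\right)\left(z\frac{d}{dz}+c-1\right)^m$. Then $D^c_{m+1}=\sum_{k=0}^{m+1}a^c_{m+1,k}(z)\frac{d^k}{dz^k}$ where each $a^c_{m+1,k}(z)\in\mathbb C[z]$ has the factorization $a^c_{m+1,k}(z)=(\alpha_{m+1,k}(c)z+\beta_{m+1,k}(c))z^k$ (so has degree at most $k+1$) with $\alpha_{m+1,k}(c),\beta_{m+1,k}(c)\in\mathbb Z[c]$, and the top coefficient is $a^c_{m+1,m+1}(z)=(1-z)z^{m+1}$, independent of $c$. *)

theory Defs
  imports "HOL-Computational_Algebra.Formal_Laurent_Series" "HOL-Computational_Algebra.Polynomial"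
begin

text \<open>Differential operators in the variable z are realised by their action on
  formal Laurent series over the complex numbers (z = fls_X, 1/z = fls_X_inv,
  d/dz = fls_deriv).\<close>

definition euler_op :: "complex \<Rightarrow> complex fls \<Rightarrow> complex fls" where
  "euler_op c g = fls_X * fls_deriv g + fls_const (c - 1) * g"

definition D_op :: "complex \<Rightarrow> nat \<Rightarrow> complex fls \<Rightarrow> complex fls" where
  "D_op c m f = fls_X ^ 2 * fls_deriv ((1 - fls_X) * fls_X_inv * ((euler_op c ^^ m) f))"

definition ipoly_eval :: "int poly \<Rightarrow> complex \<Rightarrow> complex" where
  "ipoly_eval p c = poly (map_poly of_int p) c"

end

theory Submission
  imports Defs
begin

lemma fc_add: "fls_const (x + y) = fls_const x + fls_const y"
  by (simp add: fls_plus_const)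
lemma fc_mult: "fls_const (x * y) = fls_const x * fls_const (y::complex)"
  by simp
lemma fc_diff: "fls_const (x - y) = fls_const x - fls_const y"
  by (simp add: fls_minus_const)

lemma mp_add: "map_poly (of_int :: int \<Rightarrow> complex) (p + q) = map_poly of_int p + map_poly of_int q"
  by (rule poly_eqI) (simp add: coeff_map_poly)
lemma mp_uminus: "map_poly (of_int :: int \<Rightarrow> complex) (- p) = - map_poly of_int p"
  by (rule poly_eqI) (simp add: coeff_map_poly)
lemma mp_mult: "map_poly (of_int :: int \<Rightarrow> complex) (p * q) = map_poly of_int p * map_poly of_int q"
  by (rule poly_eqI) (simp add: coeff_map_poly coeff_mult)

lemma ev_add: "ipoly_eval (p + q) c = ipoly_eval p c + ipoly_eval q c"
  by (simp add: ipoly_eval_def mp_add)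
lemma ev_mult: "ipoly_eval (p * q) c = ipoly_eval p c * ipoly_eval q c"
  by (simp add: ipoly_eval_def mp_mult)
lemma ev_uminus: "ipoly_eval (- p) c = - ipoly_eval p c"
  by (simp add: ipoly_eval_def mp_uminus)
lemma ev_lin: "ipoly_eval [:a, b:] c = of_int a + of_int b * c"
  by (simp add: ipoly_eval_def map_poly_pCons)
lemma ev_0: "ipoly_eval 0 c = 0" by (simp add: ipoly_eval_def)
lemma ev_1: "ipoly_eval 1 c = 1" by (simp add: ipoly_eval_def)

lemma X_Xinv: "fls_X * (fls_X_inv :: complex fls) = 1"
  by (simp add: fls_X_inv_times_conv_shift)

lemma fc_of_nat: "fls_const (of_nat k :: complex) = of_nat k"
  by (induction k) (simp_all add: fc_add)

lemma E_add: "euler_op c (a + b) = euler_op c a + euler_op c b"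
  by (simp add: euler_op_def algebra_simps)
lemma E_sum: "euler_op c (sum g S) = (\<Sum>k\<in>S. euler_op c (g k))"
proof (cases "finite S")
  case True then show ?thesis
    by (induction rule: finite_induct) (simp add: euler_op_def, simp add: E_add)
qed (simp add: euler_op_def)

lemma E_term: "euler_op c (fls_const a * fls_X ^ k * g) =
   fls_const (a * (of_nat k + c - 1)) * fls_X ^ k * g + fls_const a * fls_X ^ Suc k * fls_deriv g"
proof -
  have d: "fls_deriv (fls_const a * fls_X ^ k * g) = fls_const a * (of_nat k * fls_X ^ (k - 1) * g + fls_X ^ k * fls_deriv g)"
    by (simp only: fls_deriv_mult fls_deriv_X_power fls_deriv_const) (simp add: algebra_simps)
  have x: "fls_X * (of_nat k * fls_X ^ (k - 1)) = (of_nat k * fls_X ^ k :: complex fls)"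
    by (cases k) (simp_all add: algebra_simps)
  have "euler_op c (fls_const a * fls_X ^ k * g) =
     fls_const a * (fls_X * (of_nat k * fls_X ^ (k - 1))) * g + fls_const a * (fls_X * fls_X ^ k) * fls_deriv g
     + fls_const (c - 1) * fls_const a * fls_X ^ k * g"
    unfolding euler_op_def d by (simp only: algebra_simps)
  also have "\<dots> = fls_const a * (of_nat k * fls_X ^ k) * g + fls_const a * fls_X ^ Suc k * fls_deriv g
     + fls_const (c - 1) * fls_const a * fls_X ^ k * g" by (simp only: x power_Suc)
  also have "\<dots> = fls_const (a * (of_nat k + c - 1)) * fls_X ^ k * g + fls_const a * fls_X ^ Suc k * fls_deriv g"
    by (simp only: fc_mult fc_add fc_diff fc_of_nat fls_const_1) (simp add: algebra_simps)
  finally show ?thesis .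
qed

fun ecoef :: "nat \<Rightarrow> nat \<Rightarrow> int poly" where
  "ecoef 0 k = (if k = 0 then 1 else 0)"
| "ecoef (Suc m) k = [:int k - 1, 1:] * ecoef m k + (case k of 0 \<Rightarrow> 0 | Suc j \<Rightarrow> ecoef m j)"

lemma ecoef_zero: "k > m \<Longrightarrow> ecoef m k = 0"
  by (induction m arbitrary: k) (auto split: nat.split)

lemma ecoef_top: "ecoef m m = 1"
  by (induction m) (simp_all add: ecoef_zero)

lemma ev_ecoef_Suc: "ipoly_eval (ecoef (Suc m) k) c =
   ipoly_eval (ecoef m k) c * (of_nat k + c - 1) + (case k of 0 \<Rightarrow> 0 | Suc j \<Rightarrow> ipoly_eval (ecoef m j) c)"
  unfolding ecoef.simps ev_add ev_mult ev_lin by (cases k) (simp_all add: ev_0 algebra_simps)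

lemma E_pow: "(euler_op c ^^ m) f =
   (\<Sum>k\<le>m. fls_const (ipoly_eval (ecoef m k) c) * fls_X ^ k * (fls_deriv ^^ k) f)"
proof (induction m)
  case 0
  then show ?case by (simp add: ev_1)
next
  case (Suc m)
  define T where "T k = fls_X ^ k * (fls_deriv ^^ k) f" for k
  define e where "e k = ipoly_eval (ecoef m k) c" for k
  have "(euler_op c ^^ Suc m) f = (\<Sum>k\<le>m. euler_op c (fls_const (e k) * fls_X ^ k * (fls_deriv ^^ k) f))"
    using Suc by (simp add: E_sum e_def)
  also have "\<dots> = (\<Sum>k\<le>m. fls_const (e k * (of_nat k + c - 1)) * T k)
      + (\<Sum>k\<le>m. fls_const (e k) * T (Suc k))"
    by (simp only: E_term) (simp add: sum.distrib T_def mult.assoc)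
  also have "(\<Sum>k\<le>m. fls_const (e k * (of_nat k + c - 1)) * T k) =
      (\<Sum>k\<le>Suc m. fls_const (e k * (of_nat k + c - 1)) * T k)"
    by (simp add: e_def ecoef_zero ev_0)
  also have "(\<Sum>k\<le>m. fls_const (e k) * T (Suc k)) =
      (\<Sum>k\<le>Suc m. fls_const (case k of 0 \<Rightarrow> 0 | Suc j \<Rightarrow> e j) * T k)"
    by (subst sum.atMost_Suc_shift) simp
  also have "(\<Sum>k\<le>Suc m. fls_const (e k * (of_nat k + c - 1)) * T k) +
      (\<Sum>k\<le>Suc m. fls_const (case k of 0 \<Rightarrow> 0 | Suc j \<Rightarrow> e j) * T k) =
      (\<Sum>k\<le>Suc m. fls_const (ipoly_eval (ecoef (Suc m) k) c) * T k)"
    unfolding ev_ecoef_Suc e_def by (simp only: sum.distrib[symmetric] fc_add distrib_right)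
  finally show ?case by (simp add: T_def mult.assoc)
qed

lemma D_alt: "D_op c m f = (1 - fls_X) * euler_op c ((euler_op c ^^ m) f)
   + (fls_const (c - 1) * fls_X - fls_const c) * ((euler_op c ^^ m) f)"
proof -
  define g where "g = (euler_op c ^^ m) f"
  define X :: "complex fls" where "X = fls_X"
  define Y :: "complex fls" where "Y = fls_X_inv"
  have XY: "X * Y = 1" unfolding X_def Y_def by (rule X_Xinv)
  have a: "X^2 * Y = X" by (simp add: power2_eq_square XY flip: mult.assoc)
  have b: "X^2 * Y^2 = 1" by (simp add: power2_eq_square) (metis XY mult.assoc mult.left_commute mult_1_right)
  have "D_op c m f = X^2 * ((1-X)*Y*fls_deriv g + ((1-X)*(-(Y^2)) - Y)*g)"
    unfolding D_op_def g_def[symmetric] X_def Y_def by (simp add: algebra_simps)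
  also have "\<dots> = (1-X)*(X^2*Y)*fls_deriv g - (1-X)*(X^2*Y^2)*g - (X^2*Y)*g"
    by (simp add: algebra_simps)
  also have "\<dots> = (1-X)*X*fls_deriv g - (1-X)*g - X*g" by (simp only: a b mult_1_right)
  also have "\<dots> = (1 - X) * euler_op c g + (fls_const (c - 1) * X - fls_const c) * g"
    unfolding euler_op_def X_def[symmetric] fc_diff fls_const_1 by (simp add: algebra_simps)
  finally show ?thesis unfolding g_def X_def .
qed

theorem lemma8p2:
  fixes m :: nat
  shows "\<exists>\<alpha> \<beta> :: nat \<Rightarrow> int poly.
    (\<forall>(c::complex) (f::complex fls).
       D_op c m f =
       (\<Sum>k\<le>m+1. (fls_const (ipoly_eval (\<alpha> k) c) * fls_X + fls_const (ipoly_eval (\<beta> k) c))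
                   * fls_X ^ k * ((fls_deriv ^^ k) f)))
    \<and> (\<forall>c::complex. (fls_const (ipoly_eval (\<alpha> (m+1)) c) * fls_X + fls_const (ipoly_eval (\<beta> (m+1)) c))
                   * fls_X ^ (m+1) = (1 - fls_X) * fls_X ^ (m+1))"
proof (intro exI conjI allI)
  define \<alpha> where "\<alpha> k = - ecoef (Suc m) k + [:-1, 1:] * ecoef m k" for k
  define \<beta> where "\<beta> k = ecoef (Suc m) k + [:0, -1:] * ecoef m k" for k
  fix c :: complex and f :: "complex fls"
  define a1 where "a1 k = ipoly_eval (ecoef (Suc m) k) c" for k
  define a0 where "a0 k = ipoly_eval (ecoef m k) c" for k
  define T where "T k = fls_X ^ k * (fls_deriv ^^ k) f" for k
  have ea: "ipoly_eval (\<alpha> k) c = - a1 k + (c - 1) * a0 k" for k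
    unfolding \<alpha>_def ev_add ev_mult ev_uminus ev_lin a1_def[symmetric] a0_def[symmetric] by simp
  have eb: "ipoly_eval (\<beta> k) c = a1 k - c * a0 k" for k
    unfolding \<beta>_def ev_add ev_mult ev_uminus ev_lin a1_def[symmetric] a0_def[symmetric] by simp
  have p1: "(euler_op c ^^ Suc m) f = (\<Sum>k\<le>m+1. fls_const (a1 k) * T k)"
    unfolding E_pow a1_def T_def by (simp add: mult.assoc)
  have p0: "(euler_op c ^^ m) f = (\<Sum>k\<le>m+1. fls_const (a0 k) * T k)"
    unfolding E_pow a0_def T_def by (simp add: mult.assoc ecoef_zero ev_0)
  have "D_op c m f = (1 - fls_X) * (\<Sum>k\<le>m+1. fls_const (a1 k) * T k)
      + (fls_const (c - 1) * fls_X - fls_const c) * (\<Sum>k\<le>m+1. fls_const (a0 k) * T k)"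
    unfolding D_alt p0[symmetric] p1[symmetric] by simp
  also have "\<dots> = (\<Sum>k\<le>m+1. ((1 - fls_X) * fls_const (a1 k)
      + (fls_const (c - 1) * fls_X - fls_const c) * fls_const (a0 k)) * T k)"
    by (simp only: sum_distrib_left sum.distrib[symmetric] distrib_right mult.assoc)
  also have "\<dots> = (\<Sum>k\<le>m+1. (fls_const (ipoly_eval (\<alpha> k) c) * fls_X + fls_const (ipoly_eval (\<beta> k) c))
                   * fls_X ^ k * ((fls_deriv ^^ k) f))"
  proof (rule sum.cong[OF refl])
    fix k
    show "((1 - fls_X) * fls_const (a1 k)
      + (fls_const (c - 1) * fls_X - fls_const c) * fls_const (a0 k)) * T k =
      (fls_const (ipoly_eval (\<alpha> k) c) * fls_X + fls_const (ipoly_eval (\<beta> k) c))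
                   * fls_X ^ k * ((fls_deriv ^^ k) f)"
      unfolding ea eb T_def fc_add fc_diff fc_mult fls_const_uminus fls_const_1
      by (simp add: algebra_simps)
  qed
  finally show "D_op c m f = (\<Sum>k\<le>m+1. (fls_const (ipoly_eval (\<alpha> k) c) * fls_X + fls_const (ipoly_eval (\<beta> k) c))
                   * fls_X ^ k * ((fls_deriv ^^ k) f))" .
next
  fix c :: complex
  define \<alpha> where "\<alpha> k = - ecoef (Suc m) k + [:-1, 1:] * ecoef m k" for k
  define \<beta> where "\<beta> k = ecoef (Suc m) k + [:0, -1:] * ecoef m k" for k
  show "(fls_const (ipoly_eval (\<alpha> (m+1)) c) * fls_X + fls_const (ipoly_eval (\<beta> (m+1)) c))
                   * fls_X ^ (m+1) = (1 - fls_X) * fls_X ^ (m+1)"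
  proof -
    have t1: "ecoef (Suc m) (m+1) = 1" using ecoef_top[of "Suc m"] by simp
    have t0: "ecoef m (m+1) = 0" by (simp add: ecoef_zero)
    show ?thesis unfolding \<alpha>_def \<beta>_def t1 t0
      by (simp add: ev_uminus ev_1 ev_0 algebra_simps)
  qed
qed

end
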